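(* Let $T$ be a reduced linear trellis of length $n$, let $\boldsymbol{\alpha}^1,\dots,\boldsymbol{\alpha}^r\in\mathbb{F}^n$ and let $(a_1,l_1),\dots,(a_r,l_r)$ be spans with $0\le l_i\le n$. Then $T\simeq\bigotimes_{i=1}^r\boldsymbol{\alpha}^i|(a_i,l_i)$ if and only if there exist $\mathbf{v}^1,\dots,\mathbf{v}^r\in\prod_iV_i(T)$ such that $\{(\mathbf{v}^i,\boldsymbol{\alpha}^i)\}_{i=1,\dots,r}$ is a product basis of $T$ and each cycle $(\mathbf{v}^i,\boldsymbol{\alpha}^i)$ has minimum span $(a_i,l_i)$.
   Context: Let $\mathbb{F}$ be a finite field and $n\ge1$; indices are taken in $\mathbb{Z}_n$. A trellis $T$ of length $n$ over $\mathbb{F}$ consists of pairwise disjoint finite vertex sets $V_i(T)$, $i\in\mathbb{Z}_n$, and edge sets $E_i(T)\subseteq V_i(T)\times\mathbb{F}\times V_{i+1}(T)$; $(v,\alpha,w)\in E_i(T)$ is an edge from $v$ to $w$ with label $\alpha$ at time index $i$. Every trellis is assumed trim (each vertex has an outgoing and an incoming edge). $T$ is linear if every $V_i(T)$ is an $\mathbb{F}$-vector space and every $E_i(T)$ a subspace. A cycle is a closed path $v_0\alpha_0v_1\cdots\alpha_{n-1}v_n$, $v_n=v_0\in V_0(T)$, of length $n$, identified with $(\mathbf{v},\boldsymbol{\alpha})\in\prod_{i}V_i(T)\times\mathbb{F}^n$; $\mathbb{S}(T)$ is the set of cycles. $T$ is reduced if every edge lies on some cycle. Isomorphisms: for trellises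 of the same length, an isomorphism $f:T\to T'$ is a family of bijections $f_i:V_i(T)\to V_i(T')$ with $(v,\alpha,w)\in E_i(T)\iff(f_i(v),\alpha,f_{i+1}(w))\in E_i(T')$; if $T,T'$ are linear and all $f_i$ linear, $f$ is a linear isomorphism, written $T\simeq T'$. Spans: for $a\in\mathbb{Z}_n$, $0\le l\le n-1$, $[a,a+l]=\{a,\dots,a+l\}\subseteq\mathbb{Z}_n$, $(a,a+l]=[a,a+l]\setminus\{a\}$; the pair $(a,l)$ is a span; degenerate spans are $\emptyset$ (length $-1$) and $\mathbb{Z}_n$ (length $n$, written $(a,n)$). Partial order: $(a_1,l_1)\le(a_2,l_2)$ iff ($l_1\le l_2<n-1$ and $[a_1,a_1+l_1]\subseteq[a_2,a_2+l_2]$) or ($l_2=n-1$ and $(a_1,a_1+l_1]\subseteq(a_2,a_2+l_2]$) or $l_1=-1$ or $l_2=n$. A vector $\boldsymbol{\alpha}\in\mathbb{F}^n$ has span $(a,l)$ ($0\le l\le n-1$) if its support lies in $[a,a+l]$; $\mathbb{Z}_n$ is a span of every vector. A nondegenerate $(a,l)$ is a span of a cycle $(\mathbf{v},\boldsymbol{\alpha})$ if $\{i:v_i\ne0\}\subseteq(a,a+l]$ and $\{i:\alpha_i\ne0\}\subseteq[a,a+l]$; $\emptyset$ is a span only of the zero cycle, $\mathbb{Z}_n$ of every cycle. The minimum span of a cycle is a span of it that is $\le$ every other span of it (when it exists). $\mathbb{S}_{\mathfrak{s}}(T)$ is the subspace of cycles having span $\mathfrak{s}$. A product basis of $T$ is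 a basis $\mathcal{B}$ of $\mathbb{S}(T)$ such that $\mathcal{B}\cap\mathbb{S}_{\mathfrak{s}}(T)$ spans $\mathbb{S}_{\mathfrak{s}}(T)$ for every span $\mathfrak{s}$. Elementary trellises and products: for $\boldsymbol{\alpha}\in\mathbb{F}^n$ with span $(a,l)$, $0\le l\le n$, the elementary trellis $\boldsymbol{\alpha}|(a,l)$ has $V_i=\mathbb{F}$ for $i\in(a,a+l]$ (for $l=n$ this is all of $\mathbb{Z}_n$), $V_i=0$ otherwise, and $E_i=\langle(u_i,\alpha_i,u_{i+1})\rangle$ where $u_i=1$ if $i\in(a,a+l]$ and $u_i=0$ otherwise. The product $T\otimes T'$ has $V_i=V_i(T)\times V_i(T')$ and $E_i=\{((v,v'),\alpha+\alpha',(w,w')):(v,\alpha,w)\in E_i(T),(v',\alpha',w')\in E_i(T')\}$. Convention: in a product of elementary trellises at most one factor has span $(a,0)$ for each $a\in\mathbb{Z}_n$. *)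

theory Defs
  imports Complex_Main "HOL-Library.Function_Algebras"
begin

text \<open>Indices of Z_n are represented by naturals i < n; successor is Suc i mod n.
  Vectors / vertex sequences are functions on nat that vanish at indices \<ge> n.\<close>

definition halfopen :: "nat \<Rightarrow> nat \<Rightarrow> nat \<Rightarrow> nat set" where
  "halfopen n a l = {(a + k) mod n | k. 1 \<le> k \<and> k \<le> l}"

definition closedint :: "nat \<Rightarrow> nat \<Rightarrow> nat \<Rightarrow> nat set" where
  "closedint n a l = {(a + k) mod n | k. k \<le> l}"

definition is_trellis ::
  "nat \<Rightarrow> (nat \<Rightarrow> 'v set) \<Rightarrow> (nat \<Rightarrow> ('v \<times> 'f \<times> 'v) set) \<Rightarrow> bool" where
  "is_trellis n V E \<longleftrightarrow> (\<forall>i<n. finite (V i)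
     \<and> E i \<subseteq> {(v, \<alpha>, w). v \<in> V i \<and> w \<in> V (Suc i mod n)}
     \<and> (\<forall>v\<in>V i. \<exists>\<alpha> w. (v, \<alpha>, w) \<in> E i)
     \<and> (\<forall>w\<in>V (Suc i mod n). \<exists>v \<alpha>. (v, \<alpha>, w) \<in> E i))"

definition is_linear_trellis ::
  "('f::field \<Rightarrow> 'v::ab_group_add \<Rightarrow> 'v) \<Rightarrow> nat \<Rightarrow> (nat \<Rightarrow> 'v set)
     \<Rightarrow> (nat \<Rightarrow> ('v \<times> 'f \<times> 'v) set) \<Rightarrow> bool" where
  "is_linear_trellis scale n V E \<longleftrightarrow> is_trellis n V E \<and> (\<forall>i<n.
     0 \<in> V i \<and> (\<forall>x\<in>V i. \<forall>y\<in>V i. x + y \<in> V i) \<and> (\<forall>c. \<forall>x\<in>V i. scale c x \<in> V i)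
     \<and> (0, 0, 0) \<in> E i
     \<and> (\<forall>v \<alpha> w v' \<alpha>' w'. (v, \<alpha>, w) \<in> E i \<longrightarrow> (v', \<alpha>', w') \<in> E i
           \<longrightarrow> (v + v', \<alpha> + \<alpha>', w + w') \<in> E i)
     \<and> (\<forall>c v \<alpha> w. (v, \<alpha>, w) \<in> E i \<longrightarrow> (scale c v, c * \<alpha>, scale c w) \<in> E i))"

definition cycles ::
  "nat \<Rightarrow> (nat \<Rightarrow> ('v::zero \<times> 'f::zero \<times> 'v) set) \<Rightarrow> ((nat \<Rightarrow> 'v) \<times> (nat \<Rightarrow> 'f)) set" where
  "cycles n E = {(v, \<alpha>). (\<forall>i<n. (v i, \<alpha> i, v (Suc i mod n)) \<in> E i)
                       \<and> (\<forall>i. n \<le> i \<longrightarrow> v i = 0 \<and> \<alpha> i = 0)}"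

definition is_reduced ::
  "nat \<Rightarrow> (nat \<Rightarrow> 'v set) \<Rightarrow> (nat \<Rightarrow> ('v::zero \<times> 'f::zero \<times> 'v) set) \<Rightarrow> bool" where
  "is_reduced n V E \<longleftrightarrow> (\<forall>i<n. \<forall>e\<in>E i. \<exists>v \<alpha>. (v, \<alpha>) \<in> cycles n E
        \<and> (v i, \<alpha> i, v (Suc i mod n)) = e)"

definition lin_iso ::
  "('f::field \<Rightarrow> 'v::ab_group_add \<Rightarrow> 'v) \<Rightarrow> nat \<Rightarrow> (nat \<Rightarrow> 'v set) \<Rightarrow> (nat \<Rightarrow> ('v \<times> 'f \<times> 'v) set)
   \<Rightarrow> ('f \<Rightarrow> 'w::ab_group_add \<Rightarrow> 'w) \<Rightarrow> (nat \<Rightarrow> 'w set) \<Rightarrow> (nat \<Rightarrow> ('w \<times> 'f \<times> 'w) set) \<Rightarrow> bool" where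
  "lin_iso scale n V E scale' V' E' \<longleftrightarrow> (\<exists>f :: nat \<Rightarrow> 'v \<Rightarrow> 'w. \<forall>i<n.
      bij_betw (f i) (V i) (V' i)
      \<and> (\<forall>x\<in>V i. \<forall>y\<in>V i. f i (x + y) = f i x + f i y)
      \<and> (\<forall>c. \<forall>x\<in>V i. f i (scale c x) = scale' c (f i x))
      \<and> (\<forall>v\<in>V i. \<forall>\<alpha>. \<forall>w\<in>V (Suc i mod n).
            (v, \<alpha>, w) \<in> E i \<longleftrightarrow> (f i v, \<alpha>, f (Suc i mod n) w) \<in> E' i))"

text \<open>Elementary trellis alpha|(a,l), 0 \<le> l \<le> n (l = n means the full span Z_n).\<close>
definition elem_u :: "nat \<Rightarrow> nat \<Rightarrow> nat \<Rightarrow> nat \<Rightarrow> 'f::field" where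
  "elem_u n a l i = (if i \<in> halfopen n a l then 1 else 0)"

definition elemV :: "nat \<Rightarrow> nat \<Rightarrow> nat \<Rightarrow> nat \<Rightarrow> 'f::field set" where
  "elemV n a l i = (if i \<in> halfopen n a l then UNIV else {0})"

definition elemE :: "nat \<Rightarrow> (nat \<Rightarrow> 'f::field) \<Rightarrow> nat \<Rightarrow> nat \<Rightarrow> nat \<Rightarrow> ('f \<times> 'f \<times> 'f) set" where
  "elemE n \<alpha> a l i = {(c * elem_u n a l i, c * \<alpha> i, c * elem_u n a l (Suc i mod n)) | c. True}"

text \<open>The product of r trellises (indexed by j < r); a vertex is the tuple j \<mapsto> v_j.\<close>
definition prodV :: "nat \<Rightarrow> (nat \<Rightarrow> nat \<Rightarrow> 'w::zero set) \<Rightarrow> nat \<Rightarrow> (nat \<Rightarrow> 'w) set" where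
  "prodV r Vs i = {v. (\<forall>j<r. v j \<in> Vs j i) \<and> (\<forall>j. r \<le> j \<longrightarrow> v j = 0)}"

definition prodE :: "nat \<Rightarrow> (nat \<Rightarrow> nat \<Rightarrow> ('w::zero \<times> 'f::comm_monoid_add \<times> 'w) set)
     \<Rightarrow> nat \<Rightarrow> ((nat \<Rightarrow> 'w) \<times> 'f \<times> (nat \<Rightarrow> 'w)) set" where
  "prodE r Es i = {(v, \<Sum>j<r. \<alpha> j, w) | v \<alpha> w. (\<forall>j<r. (v j, \<alpha> j, w j) \<in> Es j i)
                      \<and> (\<forall>j. r \<le> j \<longrightarrow> v j = 0 \<and> w j = 0)}"

text \<open>Spans: the empty span, the full span Z_n, and nondegenerate spans (a,l), a < n, l \<le> n-1.\<close>
datatype span = EmptySp | FullSp | Sp nat nat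

definition mkspan :: "nat \<Rightarrow> nat \<Rightarrow> nat \<Rightarrow> span" where
  "mkspan n a l = (if l = n then FullSp else Sp a l)"

fun span_le :: "nat \<Rightarrow> span \<Rightarrow> span \<Rightarrow> bool" where
  "span_le n EmptySp s = True"
| "span_le n s FullSp = True"
| "span_le n FullSp s = False"
| "span_le n (Sp a l) EmptySp = False"
| "span_le n (Sp a1 l1) (Sp a2 l2) =
     ((l1 \<le> l2 \<and> l2 < n - 1 \<and> closedint n a1 l1 \<subseteq> closedint n a2 l2)
      \<or> (l2 = n - 1 \<and> halfopen n a1 l1 \<subseteq> halfopen n a2 l2))"

fun cyc_has_span :: "nat \<Rightarrow> span \<Rightarrow> (nat \<Rightarrow> 'v::zero) \<times> (nat \<Rightarrow> 'f::zero) \<Rightarrow> bool" where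
  "cyc_has_span n EmptySp c = (fst c = (\<lambda>_. 0) \<and> snd c = (\<lambda>_. 0))"
| "cyc_has_span n FullSp c = True"
| "cyc_has_span n (Sp a l) c = (a < n \<and> l < n
     \<and> (\<forall>i<n. fst c i \<noteq> 0 \<longrightarrow> i \<in> halfopen n a l)
     \<and> (\<forall>i<n. snd c i \<noteq> 0 \<longrightarrow> i \<in> closedint n a l))"

definition is_min_span :: "nat \<Rightarrow> (nat \<Rightarrow> 'v::zero) \<times> (nat \<Rightarrow> 'f::zero) \<Rightarrow> span \<Rightarrow> bool" where
  "is_min_span n c s \<longleftrightarrow> cyc_has_span n s c \<and> (\<forall>s'. cyc_has_span n s' c \<longrightarrow> span_le n s s')"

definition lincomb :: "('f::field \<Rightarrow> 'v::ab_group_add \<Rightarrow> 'v) \<Rightarrow> nat set \<Rightarrow> (nat \<Rightarrow> 'f)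
    \<Rightarrow> (nat \<Rightarrow> (nat \<Rightarrow> 'v) \<times> (nat \<Rightarrow> 'f)) \<Rightarrow> (nat \<Rightarrow> 'v) \<times> (nat \<Rightarrow> 'f)" where
  "lincomb scale J c b = ((\<lambda>i. \<Sum>j\<in>J. scale (c j) (fst (b j) i)), (\<lambda>i. \<Sum>j\<in>J. c j * snd (b j) i))"

definition product_basis :: "('f::field \<Rightarrow> 'v::ab_group_add \<Rightarrow> 'v) \<Rightarrow> nat
    \<Rightarrow> (nat \<Rightarrow> ('v \<times> 'f \<times> 'v) set) \<Rightarrow> nat \<Rightarrow> (nat \<Rightarrow> (nat \<Rightarrow> 'v) \<times> (nat \<Rightarrow> 'f)) \<Rightarrow> bool" where
  "product_basis scale n E r b \<longleftrightarrow>
     (\<forall>j<r. b j \<in> cycles n E)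
   \<and> (\<forall>c. lincomb scale {..<r} c b = ((\<lambda>_. 0), (\<lambda>_. 0)) \<longrightarrow> (\<forall>j<r. c j = 0))
   \<and> (\<forall>x\<in>cycles n E. \<exists>c. x = lincomb scale {..<r} c b)
   \<and> (\<forall>s. \<forall>x\<in>cycles n E. cyc_has_span n s x \<longrightarrow>
        (\<exists>c. x = lincomb scale {j. j < r \<and> cyc_has_span n s (b j)} c b))"

end

theory Submission
  imports Defs
begin


lemma ho_lt: "i \<in> halfopen n a l \<Longrightarrow> 0 < n \<Longrightarrow> i < n"
  by (auto simp: halfopen_def)
lemma ci_lt: "i \<in> closedint n a l \<Longrightarrow> 0 < n \<Longrightarrow> i < n"
  by (auto simp: closedint_def)
lemma ho_ci: "i \<in> halfopen n a l \<Longrightarrow> i \<in> closedint n a l"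
  by (auto simp: halfopen_def closedint_def)
lemma ho_zero: "halfopen n a 0 = {}"
  by (auto simp: halfopen_def)
lemma ci_zero: "a < n \<Longrightarrow> closedint n a 0 = {a}"
  by (auto simp: closedint_def)
lemma ho_first: "1 \<le> l \<Longrightarrow> (a+1) mod n \<in> halfopen n a l"
  by (auto simp: halfopen_def intro!: exI[of _ 1])
lemma ho_mono: "l \<le> l' \<Longrightarrow> halfopen n a l \<subseteq> halfopen n a l'"
  by (auto simp: halfopen_def)
lemma ci_ho_suc: "1 \<le> l \<Longrightarrow> i \<in> closedint n a l \<Longrightarrow> i \<in> halfopen n a l \<or> Suc i mod n \<in> halfopen n a l"
proof -
  assume l: "1 \<le> l" and "i \<in> closedint n a l"
  then obtain k where k: "k \<le> l" "i = (a + k) mod n" by (auto simp: closedint_def)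
  show ?thesis
  proof (cases "k = 0")
    case True
    then have "Suc i mod n = (a + 1) mod n" using k by (simp add: mod_Suc_eq)
    then show ?thesis using ho_first[OF l] by simp
  next
    case False
    then show ?thesis using k by (auto simp: halfopen_def)
  qed
qed
lemma mod_lcancel: "(a + k1) mod n = (a + k2) mod (n::nat) \<Longrightarrow> k1 mod n = k2 mod n"
proof -
  assume h: "(a + k1) mod n = (a + k2) mod (n::nat)"
  have "(int a + int k1) mod int n = (int a + int k2) mod int n"
  proof -
    have "int ((a+k1) mod n) = int ((a+k2) mod n)" using h by simp
    then show ?thesis by (simp add: zmod_int)
  qed
  then have "((int a + int k1) mod int n - int a) mod int n = ((int a + int k2) mod int n - int a) mod int n"
    by simp
  then have "int k1 mod int n = int k2 mod int n" by (simp add: mod_diff_left_eq)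
  then have "int (k1 mod n) = int (k2 mod n)" by (simp add: zmod_int)
  then show ?thesis by simp
qed
lemma ho_suc_ci: "Suc i mod n \<in> halfopen n a l \<Longrightarrow> i < n \<Longrightarrow> i \<in> closedint n a l"
proof -
  assume "Suc i mod n \<in> halfopen n a l" "i < n"
  then obtain k where k: "1 \<le> k" "k \<le> l" "Suc i mod n = (a + k) mod n" by (auto simp: halfopen_def)
  then have "(1 + i) mod n = (1 + (a + (k - 1))) mod n" by simp
  then have "i mod n = (a + (k - 1)) mod n" by (rule mod_lcancel)
  then have "i = (a + (k-1)) mod n" using \<open>i < n\<close> by simp
  then show ?thesis using k by (auto simp: closedint_def intro!: exI[of _ "k-1"])
qed
lemma mod_cancel_lt: "(a + k1) mod n = (a + k2) mod (n::nat) \<Longrightarrow> k1 < n \<Longrightarrow> k2 < n \<Longrightarrow> k1 = k2"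
proof -
  assume h: "(a + k1) mod n = (a + k2) mod n" "k1 < n" "k2 < n"
  have "k1 mod n = k2 mod n" by (rule mod_lcancel[OF h(1)])
  then show ?thesis using \<open>k1 < n\<close> \<open>k2 < n\<close> by simp
qed
lemma not_ho_self: "l < n \<Longrightarrow> a < n \<Longrightarrow> a \<notin> halfopen n a l"
proof
  assume "l < n" "a < n" "a \<in> halfopen n a l"
  then obtain k where k: "1 \<le> k" "k \<le> l" "a = (a + k) mod n" by (auto simp: halfopen_def)
  then have "(a + 0) mod n = (a + k) mod n" using \<open>a < n\<close> by simp
  moreover have "k < n" using k \<open>l < n\<close> by simp
  ultimately have "0 = k" using mod_cancel_lt[of a 0 n k] \<open>a < n\<close> by simp
  then show False using k by simp
qed
lemma off_eq: "i < (n::nat) \<Longrightarrow> i' < n \<Longrightarrow> (i + (i' + n - i) mod n) mod n = i'"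
proof -
  assume "i < n" "i' < n"
  have "(i + (i' + n - i) mod n) mod n = (i + (i' + n - i)) mod n" by (rule mod_add_right_eq)
  also have "i + (i' + n - i) = i' + n" using \<open>i < n\<close> by simp
  finally show ?thesis using \<open>i' < n\<close> by simp
qed
lemma ho_all: "i < n \<Longrightarrow> i' < n \<Longrightarrow> i' \<noteq> i \<Longrightarrow> i' \<in> halfopen n i (n-1)"
proof -
  assume h: "i < n" "i' < n" "i' \<noteq> i"
  define k where "k = (i' + n - i) mod n"
  have e: "(i + k) mod n = i'" using off_eq h k_def by simp
  have "k \<noteq> 0"
  proof
    assume "k = 0" then have "i' = i" using e h by simp
    then show False using h by simp
  qed
  moreover have "k < n" using h k_def by simp
  ultimately show ?thesis using e unfolding halfopen_def by (auto intro!: exI[of _ k])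
qed
lemma ci_all: "i < n \<Longrightarrow> i' < n \<Longrightarrow> i' \<in> closedint n i (n-1)"
proof -
  assume h: "i < n" "i' < n"
  define k where "k = (i' + n - i) mod n"
  have e: "(i + k) mod n = i'" using off_eq h k_def by simp
  have "k < n" using h k_def by simp
  then show ?thesis using e unfolding closedint_def by (auto intro!: exI[of _ k])
qed
lemma ho_full: "a < n \<Longrightarrow> i < n \<Longrightarrow> i \<in> halfopen n a n"
proof -
  assume h: "a < n" "i < n"
  show ?thesis
  proof (cases "i = a")
    case True then show ?thesis using h unfolding halfopen_def by (auto intro!: exI[of _ n])
  next
    case False then show ?thesis using ho_all[OF h(1,2)] ho_mono[of "n-1" n n a] by auto
  qed
qed
lemma ci_image: "closedint n a l = (\<lambda>k. (a+k) mod n) ` {..l}"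
  unfolding closedint_def by auto
lemma fin_ci: "finite (closedint n a l)"
  unfolding ci_image by simp
lemma card_ci: "l < n \<Longrightarrow> card (closedint n a l) = Suc l"
proof -
  assume "l < n"
  have "inj_on (\<lambda>k. (a+k) mod n) {..l}"
  proof (rule inj_onI)
    fix x y assume "x \<in> {..l}" "y \<in> {..l}" "(a+x) mod n = (a+y) mod n"
    then show "x = y" using mod_cancel_lt[of a x n y] \<open>l<n\<close> by simp
  qed
  then show ?thesis unfolding ci_image by (simp add: card_image)
qed
lemma le_from_ci: "l < n \<Longrightarrow> l' < n \<Longrightarrow> closedint n a l \<subseteq> closedint n a' l' \<Longrightarrow> l \<le> l'"
proof -
  assume h: "l < n" "l' < n" "closedint n a l \<subseteq> closedint n a' l'"
  have "card (closedint n a l) \<le> card (closedint n a' l')" by (rule card_mono[OF fin_ci h(3)])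
  then show ?thesis using card_ci[OF h(1)] card_ci[OF h(2)] by simp
qed

lemma sum_fun_app: "(\<Sum>j\<in>J. f j) x = (\<Sum>j\<in>J. f j x)"
  by (induct J rule: infinite_finite_induct) auto

lemma elem_cyc:
  fixes x g \<alpha> :: "nat \<Rightarrow> 'f::field"
  assumes an: "a < n" and ln: "l \<le> n" and np: "0 < n"
    and sup: "\<forall>i<n. \<alpha> i \<noteq> 0 \<longrightarrow> i \<in> closedint n a l"
    and nz: "l = 0 \<longrightarrow> \<alpha> a \<noteq> 0"
    and step: "\<forall>i<n. \<exists>d. x i = d * elem_u n a l i \<and> g i = d * \<alpha> i
                      \<and> x (Suc i mod n) = d * elem_u n a l (Suc i mod n)"
  shows "\<exists>c. \<forall>i<n. x i = c * elem_u n a l i \<and> g i = c * \<alpha> i"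
proof (cases "l = 0")
  case True
  have u0: "elem_u n a l i = (0::'f)" for i using True by (simp add: elem_u_def ho_zero)
  define c where "c = g a / \<alpha> a"
  have "x i = c * elem_u n a l i \<and> g i = c * \<alpha> i" if "i < n" for i
  proof -
    obtain d where d: "x i = d * elem_u n a l i" "g i = d * \<alpha> i" using step \<open>i < n\<close> by blast
    have "g i = c * \<alpha> i"
    proof (cases "i = a")
      case True
      then show ?thesis using d nz \<open>l = 0\<close> by (simp add: c_def)
    next
      case False
      then have "\<alpha> i = 0" using sup \<open>i<n\<close> ci_zero[OF an] \<open>l = 0\<close> by auto
      then show ?thesis using d by simp
    qed
    then show ?thesis using d u0 by simp
  qed
  then show ?thesis by blast
next
  case False
  then have l1: "1 \<le> l" by simp
  define c where "c = x ((a+1) mod n)"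
  have uh: "elem_u n a l i = (if i \<in> halfopen n a l then 1 else (0::'f))" for i by (simp add: elem_u_def)
  have V: "x ((a+k) mod n) = c" if "1 \<le> k" "k \<le> l" for k
    using that
  proof (induct k)
    case 0 then show ?case by simp
  next
    case (Suc k)
    show ?case
    proof (cases "k = 0")
      case True then show ?thesis by (simp add: c_def)
    next
      case False
      define p where "p = (a+k) mod n"
      have pn: "p < n" using np p_def by simp
      obtain d where d: "x p = d * elem_u n a l p" "x (Suc p mod n) = d * elem_u n a l (Suc p mod n)"
        using step pn by blast
      have ph: "p \<in> halfopen n a l" using False Suc.prems p_def unfolding halfopen_def by auto
      have sp: "Suc p mod n = (a + Suc k) mod n" using p_def by (simp add: mod_Suc_eq)
      have sh: "Suc p mod n \<in> halfopen n a l" using Suc.prems sp unfolding halfopen_def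
        by (auto intro!: exI[of _ "Suc k"])
      have "x p = c" using Suc False p_def by simp
      then show ?thesis using d ph sh uh sp by simp
    qed
  qed
  have VH: "x i = c" if "i \<in> halfopen n a l" for i
    using that V unfolding halfopen_def by auto
  have "x i = c * elem_u n a l i \<and> g i = c * \<alpha> i" if "i < n" for i
  proof -
    obtain d where d: "x i = d * elem_u n a l i" "g i = d * \<alpha> i"
        "x (Suc i mod n) = d * elem_u n a l (Suc i mod n)" using step \<open>i < n\<close> by blast
    show ?thesis
    proof (cases "i \<in> halfopen n a l")
      case True
      then show ?thesis using d VH uh by simp
    next
      case nh: False
      show ?thesis
      proof (cases "Suc i mod n \<in> halfopen n a l")
        case True
        then show ?thesis using d VH[OF True] uh nh by simp
      next
        case False
        then have "\<alpha> i = 0" using ci_ho_suc[OF l1] nh sup \<open>i < n\<close> by blast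
        then show ?thesis using d uh nh by simp
      qed
    qed
  qed
  then show ?thesis by blast
qed


lemma ci_sub: "1 \<le> l \<Longrightarrow> 0 < n \<Longrightarrow> (\<forall>i<n. i \<in> halfopen n a l \<longrightarrow> i \<in> halfopen n a' l')
   \<Longrightarrow> i \<in> closedint n a l \<Longrightarrow> i \<in> closedint n a' l'"
proof -
  assume h: "1 \<le> l" "0 < n" "\<forall>i<n. i \<in> halfopen n a l \<longrightarrow> i \<in> halfopen n a' l'" "i \<in> closedint n a l"
  have i: "i < n" using ci_lt h by blast
  show ?thesis
  proof (cases "i \<in> halfopen n a l")
    case True then show ?thesis using h i ho_ci by blast
  next
    case False
    then have s: "Suc i mod n \<in> halfopen n a l" using ci_ho_suc h by blast
    then have "Suc i mod n \<in> halfopen n a' l'" using h by simp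
    then show ?thesis using ho_suc_ci i by blast
  qed
qed

lemma sum_single: "finite A \<Longrightarrow> j \<in> A \<Longrightarrow> (\<forall>k\<in>A. k \<noteq> j \<longrightarrow> f k = 0) \<Longrightarrow> sum f A = f j"
  by (simp add: sum.remove)




locale S =
  fixes scale :: "'f::{field,finite} \<Rightarrow> 'v::ab_group_add \<Rightarrow> 'v"
    and n r :: nat
    and V :: "nat \<Rightarrow> 'v set" and E :: "nat \<Rightarrow> ('v \<times> 'f \<times> 'v) set"
    and \<alpha> :: "nat \<Rightarrow> nat \<Rightarrow> 'f" and a l :: "nat \<Rightarrow> nat"
  assumes vs: "vector_space scale"
    and n1: "1 \<le> n"
    and lin: "is_linear_trellis scale n V E"
    and red: "is_reduced n V E"
    and al: "\<forall>j<r. a j < n \<and> l j \<le> n"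
    and az: "\<forall>j<r. \<forall>i. n \<le> i \<longrightarrow> \<alpha> j i = 0"
    and asupp: "\<forall>j<r. \<forall>i<n. \<alpha> j i \<noteq> 0 \<longrightarrow> i \<in> closedint n (a j) (l j)"
    and conv: "\<forall>j<r. \<forall>k<r. j \<noteq> k \<longrightarrow> \<not> (l j = 0 \<and> l k = 0 \<and> a j = a k)"
    and anz: "\<forall>j<r. l j = 0 \<longrightarrow> \<alpha> j \<noteq> (\<lambda>_. 0)"
begin

sublocale VS: vector_space scale by (rule vs)

abbreviation uu :: "nat \<Rightarrow> nat \<Rightarrow> 'f" where "uu j i \<equiv> elem_u n (a j) (l j) i"
abbreviation "PV \<equiv> prodV r (\<lambda>j. elemV n (a j) (l j))"
abbreviation "PE \<equiv> prodE r (\<lambda>j. elemE n (\<alpha> j) (a j) (l j))"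
abbreviation ps :: "'f \<Rightarrow> (nat \<Rightarrow> 'f) \<Rightarrow> (nat \<Rightarrow> 'f)" where "ps \<equiv> (\<lambda>c v j. c * v j)"
definition Ev :: "nat \<Rightarrow> nat \<Rightarrow> nat \<Rightarrow> 'f" where
  "Ev j i = (\<lambda>k. if k = j then uu j i else 0)"
abbreviation "Ec j \<equiv> (Ev j, \<alpha> j)"

lemma npos: "0 < n" using n1 by simp

lemma uu_ho: "uu j i = (if i \<in> halfopen n (a j) (l j) then 1 else 0)"
  by (simp add: elem_u_def)

lemma uu_ge: "n \<le> i \<Longrightarrow> uu j i = 0"
  using ho_lt[of i n "a j" "l j"] npos by (auto simp: elem_u_def)

lemma alpha0: "j < r \<Longrightarrow> l j = 0 \<Longrightarrow> \<alpha> j (a j) \<noteq> 0 \<and> (\<forall>i. i \<noteq> a j \<longrightarrow> \<alpha> j i = 0)"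
proof -
  assume j: "j < r" "l j = 0"
  have sup: "\<alpha> j i = 0" if "i \<noteq> a j" for i
  proof (rule ccontr)
    assume "\<alpha> j i \<noteq> 0"
    then have "i < n" using az j by (meson not_le)
    then have "i \<in> closedint n (a j) 0" using asupp j \<open>\<alpha> j i \<noteq> 0\<close> by auto
    then show False using ci_zero al j that by auto
  qed
  obtain i where "\<alpha> j i \<noteq> 0" using anz j by auto
  then show ?thesis using sup by (cases "i = a j") auto
qed

lemma lc_fst_P: "finite J \<Longrightarrow> fst (lincomb ps J c Ec) i k = (if k \<in> J then c k * uu k i else 0)"
  by (simp add: lincomb_def sum_fun_app Ev_def if_distrib cong: if_cong)

lemma lc_snd_P: "snd (lincomb ps J c Ec) i = (\<Sum>j\<in>J. c j * \<alpha> j i)"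
  by (simp add: lincomb_def)


lemma Ev_ge: "n \<le> i \<Longrightarrow> Ev j i = 0"
  using uu_ge by (auto simp: Ev_def)

lemma Ev_in_PE: "j < r \<Longrightarrow> i < n \<Longrightarrow> (Ev j i, \<alpha> j i, Ev j (Suc i mod n)) \<in> PE i"
proof -
  assume j: "j < r" and i: "i < n"
  define g where "g = (\<lambda>k. if k = j then \<alpha> j i else 0)"
  have s: "(\<Sum>k<r. g k) = \<alpha> j i" using j by (simp add: g_def)
  have m: "\<forall>k<r. (Ev j i k, g k, Ev j (Suc i mod n) k) \<in> elemE n (\<alpha> k) (a k) (l k) i"
  proof (intro allI impI)
    fix k assume "k < r"
    show "(Ev j i k, g k, Ev j (Suc i mod n) k) \<in> elemE n (\<alpha> k) (a k) (l k) i"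
    proof (cases "k = j")
      case True
      then show ?thesis unfolding elemE_def Ev_def g_def by (auto intro!: exI[of _ 1])
    next
      case False
      then show ?thesis unfolding elemE_def Ev_def g_def by (auto intro!: exI[of _ 0])
    qed
  qed
  have z: "\<forall>k. r \<le> k \<longrightarrow> Ev j i k = 0 \<and> Ev j (Suc i mod n) k = 0" using j by (auto simp: Ev_def)
  show ?thesis unfolding prodE_def mem_Collect_eq
    by (rule exI[of _ "Ev j i"], rule exI[of _ g], rule exI[of _ "Ev j (Suc i mod n)"]) (use s m z in auto)
qed

lemma Ec_cyc: "j < r \<Longrightarrow> Ec j \<in> cycles n PE"
  unfolding cycles_def using Ev_in_PE Ev_ge az by auto

lemma PE_edge: "(v, \<beta>, w) \<in> PE i \<Longrightarrow> \<exists>\<gamma>. (\<forall>k<r. \<exists>d. v k = d * uu k i \<and> \<gamma> k = d * \<alpha> k i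
     \<and> w k = d * uu k (Suc i mod n)) \<and> \<beta> = (\<Sum>k<r. \<gamma> k) \<and> (\<forall>k. r \<le> k \<longrightarrow> v k = 0 \<and> w k = 0)"
  unfolding prodE_def elemE_def by auto

lemma P_decomp: "y \<in> cycles n PE \<Longrightarrow> \<exists>c. y = lincomb ps {..<r} c Ec"
proof -
  assume yc: "y \<in> cycles n PE"
  obtain w \<beta> where y: "y = (w, \<beta>)" by (cases y)
  have cyc: "\<forall>i<n. (w i, \<beta> i, w (Suc i mod n)) \<in> PE i" "\<forall>i. n \<le> i \<longrightarrow> w i = 0 \<and> \<beta> i = 0"
    using yc y by (auto simp: cycles_def)
  have "\<forall>i. \<exists>\<gamma>. i < n \<longrightarrow> (\<forall>k<r. \<exists>d. w i k = d * uu k i \<and> \<gamma> k = d * \<alpha> k i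
     \<and> w (Suc i mod n) k = d * uu k (Suc i mod n)) \<and> \<beta> i = (\<Sum>k<r. \<gamma> k) \<and> (\<forall>k. r \<le> k \<longrightarrow> w i k = 0)"
    using PE_edge cyc(1) by blast
  then obtain G where G: "\<forall>i. i < n \<longrightarrow> (\<forall>k<r. \<exists>d. w i k = d * uu k i \<and> G i k = d * \<alpha> k i
     \<and> w (Suc i mod n) k = d * uu k (Suc i mod n)) \<and> \<beta> i = (\<Sum>k<r. G i k) \<and> (\<forall>k. r \<le> k \<longrightarrow> w i k = 0)"
    by (metis choice)
  have "\<forall>k. \<exists>c. k < r \<longrightarrow> (\<forall>i<n. w i k = c * uu k i \<and> G i k = c * \<alpha> k i)"
  proof
    fix k
    show "\<exists>c. k < r \<longrightarrow> (\<forall>i<n. w i k = c * uu k i \<and> G i k = c * \<alpha> k i)"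
    proof (cases "k < r")
      case True
      have "\<exists>c. \<forall>i<n. (\<lambda>i. w i k) i = c * uu k i \<and> (\<lambda>i. G i k) i = c * \<alpha> k i"
        apply (rule elem_cyc)
        using al True npos asupp alpha0 G by auto
      then show ?thesis by simp
    qed simp
  qed
  then obtain C where C: "\<forall>k. k < r \<longrightarrow> (\<forall>i<n. w i k = C k * uu k i \<and> G i k = C k * \<alpha> k i)"
    by (metis choice)
  have f: "w = fst (lincomb ps {..<r} C Ec)"
  proof (intro ext)
    fix i k
    show "w i k = fst (lincomb ps {..<r} C Ec) i k"
    proof (cases "i < n")
      case True
      then show ?thesis using C G by (cases "k < r") (auto simp: lc_fst_P)
    next
      case False
      then show ?thesis using cyc(2) uu_ge by (auto simp: lc_fst_P)
    qed
  qed
  have s: "\<beta> = snd (lincomb ps {..<r} C Ec)"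
  proof (intro ext)
    fix i
    show "\<beta> i = snd (lincomb ps {..<r} C Ec) i"
    proof (cases "i < n")
      case True
      then show ?thesis using C G by (auto simp: lc_snd_P intro!: sum.cong)
    next
      case False
      then show ?thesis using cyc(2) az by (auto simp: lc_snd_P)
    qed
  qed
  show ?thesis using f s y by (intro exI[of _ C]) simp
qed

lemma coef_vert: "j < r \<Longrightarrow> 1 \<le> l j \<Longrightarrow> fst (lincomb ps {..<r} c Ec) ((a j + 1) mod n) j = c j"
  using ho_first[of "l j" "a j" n] by (simp add: lc_fst_P uu_ho)

lemma coef_lab: "j < r \<Longrightarrow> l j = 0 \<Longrightarrow> (\<forall>k<r. k \<noteq> j \<longrightarrow> 1 \<le> l k \<longrightarrow> c k = 0)
   \<Longrightarrow> snd (lincomb ps {..<r} c Ec) (a j) = c j * \<alpha> j (a j)"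
proof -
  assume h: "j < r" "l j = 0" "\<forall>k<r. k \<noteq> j \<longrightarrow> 1 \<le> l k \<longrightarrow> c k = 0"
  have "\<forall>k\<in>{..<r}. k \<noteq> j \<longrightarrow> c k * \<alpha> k (a j) = 0"
  proof (intro ballI impI)
    fix k assume k: "k \<in> {..<r}" "k \<noteq> j"
    show "c k * \<alpha> k (a j) = 0"
    proof (cases "l k = 0")
      case True
      have "k < r" using k by simp
      then have "a k \<noteq> a j" using conv[rule_format, OF h(1) \<open>k < r\<close>] h(2) k(2) True by auto
      then show ?thesis using alpha0 k True by auto
    next
      case False then show ?thesis using h k by auto
    qed
  qed
  then show ?thesis using h by (simp add: lc_snd_P sum_single)
qed

lemma P_indep: "lincomb ps {..<r} c Ec = ((\<lambda>_. 0), (\<lambda>_. 0)) \<Longrightarrow> j < r \<Longrightarrow> c j = 0"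
proof -
  assume z: "lincomb ps {..<r} c Ec = ((\<lambda>_. 0), (\<lambda>_. 0))" and j: "j < r"
  have v: "c k = 0" if "k < r" "1 \<le> l k" for k
    using coef_vert[OF that, of c] z by simp
  show ?thesis
  proof (cases "l j = 0")
    case True
    have "c j * \<alpha> j (a j) = 0" using coef_lab[OF j True, of c] v z by simp
    then show ?thesis using alpha0 j True by simp
  next
    case False then show ?thesis using v j by simp
  qed
qed

end


context S begin

lemma Ev_nz: "Ev j i \<noteq> 0 \<Longrightarrow> i \<in> halfopen n (a j) (l j)"
  by (auto simp: Ev_def uu_ho split: if_splits)

lemma Ev_self: "i \<in> halfopen n (a j) (l j) \<Longrightarrow> Ev j i j = 1"
  by (simp add: Ev_def uu_ho)

lemma P_span:
  assumes y: "y = lincomb ps {..<r} c Ec" and sp: "cyc_has_span n s y" and j: "j < r" and cj: "c j \<noteq> 0"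
  shows "cyc_has_span n s (Ec j)"
proof (cases s)
  case EmptySp
  then have "fst y = (\<lambda>_. 0) \<and> snd y = (\<lambda>_. 0)" using sp by simp
  then have "lincomb ps {..<r} c Ec = ((\<lambda>_. 0), (\<lambda>_. 0))" using y by (simp add: prod_eq_iff)
  then show ?thesis using P_indep j cj by blast
next
  case FullSp then show ?thesis by simp
next
  case (Sp a' l')
  have a'l': "a' < n" "l' < n" using sp Sp by auto
  have VS: "\<forall>i<n. fst y i \<noteq> 0 \<longrightarrow> i \<in> halfopen n a' l'" using sp Sp by auto
  have LS: "\<forall>i<n. snd y i \<noteq> 0 \<longrightarrow> i \<in> closedint n a' l'" using sp Sp by auto
  have VH: "\<forall>i<n. i \<in> halfopen n (a k) (l k) \<longrightarrow> i \<in> halfopen n a' l'" if "k < r" "c k \<noteq> 0" for k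
  proof (intro allI impI)
    fix i assume i: "i < n" "i \<in> halfopen n (a k) (l k)"
    have "fst y i k = c k" using y that i by (simp add: lc_fst_P uu_ho)
    then have "fst y i \<noteq> 0" using that by auto
    then show "i \<in> halfopen n a' l'" using VS i by blast
  qed
  have CI: "i \<in> closedint n a' l'" if "k < r" "c k \<noteq> 0" "1 \<le> l k" "i \<in> closedint n (a k) (l k)" for k i
    using ci_sub[OF that(3) npos VH[OF that(1,2)] that(4)] .
  have lab: "i \<in> closedint n a' l'" if i: "i < n" "\<alpha> j i \<noteq> 0" for i
  proof -
    have ij: "i \<in> closedint n (a j) (l j)" using asupp j i by blast
    show ?thesis
    proof (cases "l j = 0")
      case False then show ?thesis using CI[OF j cj _ ij] by simp
    next
      case True
      then have ia: "i = a j" using ij ci_zero al j by auto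
      show ?thesis
      proof (cases "snd y i = 0")
        case False then show ?thesis using LS i by blast
      next
        case True
        have "\<exists>k<r. k \<noteq> j \<and> c k \<noteq> 0 \<and> 1 \<le> l k \<and> \<alpha> k i \<noteq> 0"
        proof (rule ccontr)
          assume nex: "\<not> ?thesis"
          have "\<forall>k\<in>{..<r}. k \<noteq> j \<longrightarrow> c k * \<alpha> k i = 0"
          proof (intro ballI impI)
            fix k assume k: "k \<in> {..<r}" "k \<noteq> j"
            show "c k * \<alpha> k i = 0"
            proof (cases "l k = 0")
              case True
              have "k < r" using k by simp
              then have "a k \<noteq> a j" using conv[rule_format, OF j \<open>k < r\<close>] \<open>l j = 0\<close> k(2) True by auto
              then show ?thesis using alpha0 k True ia by auto
            next
              case False
              then have "1 \<le> l k" by simp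
              then show ?thesis using nex k by auto
            qed
          qed
          then have "snd y i = c j * \<alpha> j i" using y j by (simp add: lc_snd_P sum_single)
          then show False using True cj i by simp
        qed
        then obtain k where k: "k < r" "c k \<noteq> 0" "1 \<le> l k" "\<alpha> k i \<noteq> 0" by blast
        have "i \<in> closedint n (a k) (l k)" using asupp k i by blast
        then show ?thesis using CI k by blast
      qed
    qed
  qed
  have "\<forall>i<n. Ev j i \<noteq> 0 \<longrightarrow> i \<in> halfopen n a' l'" using VH[OF j cj] Ev_nz by blast
  then show ?thesis unfolding Sp cyc_has_span.simps fst_conv snd_conv using a'l' lab by blast
qed

lemma P_min: "j < r \<Longrightarrow> is_min_span n (Ec j) (mkspan n (a j) (l j))"
proof -
  assume j: "j < r"
  have ajn: "a j < n" "l j \<le> n" using al j by auto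
  have Evnz: "Ev j i \<noteq> 0" if "i \<in> halfopen n (a j) (l j)" for i
  proof
    assume "Ev j i = 0"
    then have "Ev j i j = 0" by simp
    then show False using Ev_self[OF that] by simp
  qed
  have has: "cyc_has_span n (mkspan n (a j) (l j)) (Ec j)"
  proof (cases "l j = n")
    case True then show ?thesis by (simp add: mkspan_def)
  next
    case False
    then have "l j < n" using ajn by simp
    moreover have "\<forall>i<n. \<alpha> j i \<noteq> 0 \<longrightarrow> i \<in> closedint n (a j) (l j)" using asupp j by blast
    moreover have "\<forall>i<n. Ev j i \<noteq> 0 \<longrightarrow> i \<in> halfopen n (a j) (l j)" using Ev_nz by blast
    ultimately show ?thesis using False ajn unfolding mkspan_def by simp
  qed
  have nz: "Ec j \<noteq> ((\<lambda>_. 0), (\<lambda>_. 0))"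
  proof (cases "l j = 0")
    case True then show ?thesis using anz j by auto
  next
    case False
    then have "Ev j ((a j + 1) mod n) \<noteq> 0" using ho_first[of "l j" "a j" n] Evnz by simp
    then show ?thesis by (metis fst_conv)
  qed
  have le: "span_le n (mkspan n (a j) (l j)) s'" if hs: "cyc_has_span n s' (Ec j)" for s'
  proof (cases s')
    case EmptySp
    then show ?thesis using hs nz by auto
  next
    case FullSp
    then show ?thesis by (simp add: mkspan_def)
  next
    case (Sp a' l')
    have a'l': "a' < n" "l' < n" using hs Sp by auto
    have VS0: "\<forall>i<n. Ev j i \<noteq> 0 \<longrightarrow> i \<in> halfopen n a' l'" using hs Sp by simp
    have VS: "\<forall>i<n. i \<in> halfopen n (a j) (l j) \<longrightarrow> i \<in> halfopen n a' l'"
      using VS0 Evnz by blast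
    have LS: "\<forall>i<n. \<alpha> j i \<noteq> 0 \<longrightarrow> i \<in> closedint n a' l'" using hs Sp by auto
    show ?thesis
    proof (cases "l j = n")
      case True
      then have "a' \<in> halfopen n (a j) (l j)" using ho_full ajn a'l' by simp
      then show ?thesis using VS a'l' not_ho_self by blast
    next
      case False
      then have mk: "mkspan n (a j) (l j) = Sp (a j) (l j)" by (simp add: mkspan_def)
      show ?thesis
      proof (cases "l' = n - 1")
        case True
        have "halfopen n (a j) (l j) \<subseteq> halfopen n a' l'" using VS ho_lt npos by blast
        then show ?thesis using mk Sp True by simp
      next
        case False
        have sub: "closedint n (a j) (l j) \<subseteq> closedint n a' l'"
        proof
          fix i assume i: "i \<in> closedint n (a j) (l j)"
          show "i \<in> closedint n a' l'"
          proof (cases "l j = 0")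
            case False then show ?thesis using ci_sub[OF _ npos VS i] by simp
          next
            case True
            then have "i = a j" using i ci_zero ajn by auto
            then show ?thesis using LS alpha0 j True ajn by auto
          qed
        qed
        have "l j \<le> l'" using le_from_ci[OF _ a'l'(2) sub] ajn \<open>l j \<noteq> n\<close> by simp
        then show ?thesis using mk Sp False sub a'l' by simp
      qed
    qed
  qed
  show ?thesis using has le by (simp add: is_min_span_def)
qed

end



lemma lc_restrict:
  assumes "finite K" "J \<subseteq> K" "\<forall>j\<in>K-J. c j = 0" "\<forall>v. sc 0 v = 0"
  shows "lincomb sc K c b = lincomb sc J c b"
proof -
  have "(\<Sum>j\<in>K. sc (c j) (fst (b j) i)) = (\<Sum>j\<in>J. sc (c j) (fst (b j) i))" for i
    by (rule sum.mono_neutral_right) (use assms in auto)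
  moreover have "(\<Sum>j\<in>K. c j * snd (b j) i) = (\<Sum>j\<in>J. c j * snd (b j) i)" for i
    by (rule sum.mono_neutral_right) (use assms in auto)
  ultimately show ?thesis by (simp add: lincomb_def)
qed

context S begin

lemma linE: "i < n \<Longrightarrow> 0 \<in> V i \<and> (\<forall>x\<in>V i. \<forall>y\<in>V i. x + y \<in> V i) \<and> (\<forall>c. \<forall>x\<in>V i. scale c x \<in> V i)
     \<and> (0, 0, 0) \<in> E i
     \<and> (\<forall>v \<alpha> w v' \<alpha>' w'. (v, \<alpha>, w) \<in> E i \<longrightarrow> (v', \<alpha>', w') \<in> E i
           \<longrightarrow> (v + v', \<alpha> + \<alpha>', w + w') \<in> E i)
     \<and> (\<forall>c v \<alpha> w. (v, \<alpha>, w) \<in> E i \<longrightarrow> (scale c v, c * \<alpha>, scale c w) \<in> E i)"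
  using lin unfolding is_linear_trellis_def by blast

lemma trE: "i < n \<Longrightarrow> finite (V i)
     \<and> E i \<subseteq> {(v, \<alpha>, w). v \<in> V i \<and> w \<in> V (Suc i mod n)}
     \<and> (\<forall>v\<in>V i. \<exists>\<alpha> w. (v, \<alpha>, w) \<in> E i)"
  using lin unfolding is_linear_trellis_def is_trellis_def by blast

lemma Esub: "i < n \<Longrightarrow> (v, \<beta>, w) \<in> E i \<Longrightarrow> v \<in> V i \<and> w \<in> V (Suc i mod n)"
  using trE by blast

lemma cyc_V: "x \<in> cycles n E \<Longrightarrow> i < n \<Longrightarrow> fst x i \<in> V i"
  unfolding cycles_def using Esub by auto

definition good :: "(nat \<Rightarrow> 'v) \<times> (nat \<Rightarrow> 'f) \<Rightarrow> bool" where
  "good x \<longleftrightarrow> (\<forall>i<n. fst x i \<in> V i) \<and> (\<forall>i. n \<le> i \<longrightarrow> fst x i = 0)"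

lemma cyc_good: "x \<in> cycles n E \<Longrightarrow> good x"
  unfolding good_def using cyc_V by (auto simp: cycles_def)

lemma Ev_PV: "j < r \<Longrightarrow> Ev j i \<in> PV i"
  unfolding prodV_def elemV_def Ev_def uu_ho by auto

lemma PE_PV: "(v, \<beta>, w) \<in> PE i \<Longrightarrow> v \<in> PV i \<and> w \<in> PV (Suc i mod n)"
  unfolding prodE_def prodV_def elemE_def elemV_def elem_u_def by auto

context
  fixes f :: "nat \<Rightarrow> 'v \<Rightarrow> nat \<Rightarrow> 'f"
  assumes iso: "\<forall>i<n. bij_betw (f i) (V i) (PV i)
      \<and> (\<forall>x\<in>V i. \<forall>y\<in>V i. f i (x + y) = f i x + f i y)
      \<and> (\<forall>c. \<forall>x\<in>V i. f i (scale c x) = ps c (f i x))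
      \<and> (\<forall>v\<in>V i. \<forall>\<alpha>. \<forall>w\<in>V (Suc i mod n).
            (v, \<alpha>, w) \<in> E i \<longleftrightarrow> (f i v, \<alpha>, f (Suc i mod n) w) \<in> PE i)"
begin

definition "g i = inv_into (V i) (f i)"
definition "vsT j i = (if i < n then g i (Ev j i) else 0)"
definition "bT j = (vsT j, \<alpha> j)"
lemma bT_eq: "bT = (\<lambda>j. (vsT j, \<alpha> j))" by (simp add: bT_def fun_eq_iff)
definition "FF x = ((\<lambda>i. if i < n then f i (fst x i) else 0), snd x)"

lemma V0: assumes "i < n" shows "0 \<in> V i" using linE[OF assms] by blast
lemma Vadd: assumes "i < n" "x \<in> V i" "y \<in> V i" shows "x + y \<in> V i"
  using linE[OF assms(1)] assms(2,3) by blast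
lemma Vscale: assumes "i < n" "x \<in> V i" shows "scale c x \<in> V i"
  using linE[OF assms(1)] assms(2) by blast
lemma fadd: assumes "i < n" "x \<in> V i" "y \<in> V i" shows "f i (x + y) = f i x + f i y"
proof -
  note h = iso[rule_format, OF assms(1), THEN conjunct2, THEN conjunct1]
  show ?thesis using h assms(2,3) by simp
qed
lemma fscale: assumes "i < n" "x \<in> V i" shows "f i (scale c x) = ps c (f i x)"
proof -
  note h = iso[rule_format, OF assms(1), THEN conjunct2, THEN conjunct2, THEN conjunct1]
  show ?thesis using h assms(2) by simp
qed
lemma fbij: assumes "i < n" shows "bij_betw (f i) (V i) (PV i)"
  by (rule iso[rule_format, OF assms(1), THEN conjunct1])
lemma finj: assumes "i < n" shows "inj_on (f i) (V i)"
  by (rule bij_betw_imp_inj_on[OF fbij[OF assms]])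
lemma fsurj: assumes "i < n" shows "f i ` V i = PV i"
  by (rule bij_betw_imp_surj_on[OF fbij[OF assms]])
lemma fedge: assumes "i < n" "v \<in> V i" "w \<in> V (Suc i mod n)" shows
   "(v, \<beta>, w) \<in> E i \<longleftrightarrow> (f i v, \<beta>, f (Suc i mod n) w) \<in> PE i"
proof -
  note h = iso[rule_format, OF assms(1), THEN conjunct2, THEN conjunct2, THEN conjunct2]
  show ?thesis using h assms(2,3) by simp
qed

lemma f0: "i < n \<Longrightarrow> f i 0 = 0"
proof -
  assume i: "i < n"
  have "f i (0 + 0) = f i 0 + f i 0" using fadd[OF i V0[OF i] V0[OF i]] .
  then show ?thesis by simp
qed

lemma fsum: assumes i: "i < n"
  shows "finite A \<Longrightarrow> (\<forall>x\<in>A. h x \<in> V i) \<Longrightarrow> f i (sum h A) = (\<Sum>x\<in>A. f i (h x)) \<and> sum h A \<in> V i"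
proof (induct A rule: finite_induct)
  case empty then show ?case using f0[OF i] V0[OF i] by simp
next
  case (insert x F)
  then have h: "h x \<in> V i" "f i (sum h F) = (\<Sum>x\<in>F. f i (h x))" "sum h F \<in> V i" by auto
  show ?case using insert(1,2) h fadd[OF i h(1) h(3)] Vadd[OF i h(1) h(3)] by simp
qed

lemma fzero: "i < n \<Longrightarrow> x \<in> V i \<Longrightarrow> f i x = 0 \<longleftrightarrow> x = 0"
proof -
  assume i: "i < n" and x: "x \<in> V i"
  show ?thesis
  proof
    assume "f i x = 0"
    then have "f i x = f i 0" using f0[OF i] by simp
    then show "x = 0" using inj_onD[OF finj[OF i] _ x V0[OF i]] by simp
  qed (simp add: f0[OF i])
qed

lemma fg: "i < n \<Longrightarrow> y \<in> PV i \<Longrightarrow> f i (g i y) = y \<and> g i y \<in> V i"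
proof -
  assume i: "i < n" and y: "y \<in> PV i"
  have "f i ` V i = PV i" using fsurj[OF i] .
  then have "y \<in> f i ` V i" using y by simp
  then show ?thesis unfolding g_def by (simp add: f_inv_into_f inv_into_into)
qed

lemma bT_cyc: "j < r \<Longrightarrow> bT j \<in> cycles n E"
proof -
  assume j: "j < r"
  have "(vsT j i, \<alpha> j i, vsT j (Suc i mod n)) \<in> E i" if i: "i < n" for i
  proof -
    have s: "Suc i mod n < n" using npos by simp
    have e: "(Ev j i, \<alpha> j i, Ev j (Suc i mod n)) \<in> PE i" using Ev_in_PE j i by blast
    have g1: "f i (g i (Ev j i)) = Ev j i" "g i (Ev j i) \<in> V i" using fg[OF i Ev_PV[OF j]] by auto
    have g2: "f (Suc i mod n) (g (Suc i mod n) (Ev j (Suc i mod n))) = Ev j (Suc i mod n)"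
       "g (Suc i mod n) (Ev j (Suc i mod n)) \<in> V (Suc i mod n)" using fg[OF s Ev_PV[OF j]] by auto
    show ?thesis using fedge[OF i g1(2) g2(2)] g1 g2 e s i unfolding vsT_def by simp
  qed
  then show ?thesis unfolding cycles_def bT_def vsT_def using az j by auto
qed

lemma good_bT: "j < r \<Longrightarrow> good (bT j)"
  unfolding good_def bT_def vsT_def using fg Ev_PV by auto

lemma FF_bT: "j < r \<Longrightarrow> FF (bT j) = Ec j"
  unfolding FF_def bT_def vsT_def using fg Ev_PV Ev_ge by (auto intro!: ext)

lemma FF_cyc: "x \<in> cycles n E \<Longrightarrow> FF x \<in> cycles n PE"
proof -
  assume x: "x \<in> cycles n E"
  have "(f i (fst x i), snd x i, f (Suc i mod n) (fst x (Suc i mod n))) \<in> PE i" if i: "i < n" for i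
  proof -
    have e: "(fst x i, snd x i, fst x (Suc i mod n)) \<in> E i" using x i by (auto simp: cycles_def)
    then show ?thesis using fedge[OF i] Esub[OF i e] by blast
  qed
  then show ?thesis using x npos unfolding FF_def cycles_def by auto
qed

lemma FF_lc: "finite J \<Longrightarrow> J \<subseteq> {..<r} \<Longrightarrow> FF (lincomb scale J c bT) = lincomb ps J c Ec \<and> good (lincomb scale J c bT)"
proof -
  assume J: "finite J" "J \<subseteq> {..<r}"
  have inV: "\<forall>j\<in>J. scale (c j) (vsT j i) \<in> V i" if "i < n" for i
    using J that fg Ev_PV linE unfolding vsT_def by auto
  have v: "f i (\<Sum>j\<in>J. scale (c j) (vsT j i)) = (\<Sum>j\<in>J. ps (c j) (Ev j i))" if i: "i < n" for i
  proof -
    have "f i (\<Sum>j\<in>J. scale (c j) (vsT j i)) = (\<Sum>j\<in>J. f i (scale (c j) (vsT j i)))"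
      using fsum[OF i J(1) inV[OF i]] by simp
    also have "\<dots> = (\<Sum>j\<in>J. ps (c j) (Ev j i))"
    proof (rule sum.cong)
      fix j assume "j \<in> J"
      then have j: "j < r" using J by auto
      have "f i (scale (c j) (vsT j i)) = ps (c j) (f i (vsT j i))"
        using fscale[OF i] fg[OF i Ev_PV[OF j]] i unfolding vsT_def by simp
      then show "f i (scale (c j) (vsT j i)) = ps (c j) (Ev j i)"
        using fg[OF i Ev_PV[OF j]] i unfolding vsT_def by simp
    qed simp
    finally show ?thesis .
  qed
  have w: "(\<Sum>j\<in>J. ps (c j) (Ev j i)) = 0" if "n \<le> i" for i
    by (rule ext) (simp add: sum_fun_app Ev_ge that)
  have "FF (lincomb scale J c bT) = lincomb ps J c Ec"
    unfolding FF_def lincomb_def bT_def using v w by (auto intro!: ext)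
  moreover have "good (lincomb scale J c bT)"
  proof -
    have "\<forall>i<n. (\<Sum>j\<in>J. scale (c j) (vsT j i)) \<in> V i" using fsum[OF _ J(1) inV] by blast
    moreover have "\<forall>i. n \<le> i \<longrightarrow> (\<Sum>j\<in>J. scale (c j) (vsT j i)) = 0" by (simp add: vsT_def)
    ultimately show ?thesis unfolding good_def lincomb_def bT_def by simp
  qed
  ultimately show ?thesis by blast
qed

lemma FF_inj: "good x \<Longrightarrow> good x' \<Longrightarrow> FF x = FF x' \<Longrightarrow> x = x'"
proof -
  assume gx: "good x" and gx': "good x'" and e: "FF x = FF x'"
  have "fst x i = fst x' i" for i
  proof (cases "i < n")
    case True
    have "fst (FF x) i = fst (FF x') i" using e by simp
    then have fe: "f i (fst x i) = f i (fst x' i)" using True by (simp add: FF_def)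
    have inj: "inj_on (f i) (V i)" using finj[OF True] .
    have m: "fst x i \<in> V i" "fst x' i \<in> V i" using gx gx' True unfolding good_def by auto
    show ?thesis using inj_onD[OF inj fe m] .
  next
    case False then show ?thesis using gx gx' unfolding good_def by simp
  qed
  moreover have "snd x = snd x'" using e unfolding FF_def by simp
  ultimately show ?thesis by (simp add: prod_eq_iff fun_eq_iff)
qed

lemma FF_span: "good x \<Longrightarrow> cyc_has_span n s (FF x) = cyc_has_span n s x"
proof -
  assume gx: "good x"
  have nz: "(fst (FF x) i = 0) = (fst x i = 0)" for i
  proof (cases "i < n")
    case True
    have xi: "fst x i \<in> V i" using gx True unfolding good_def by blast
    show ?thesis using fzero[OF True xi] True by (simp add: FF_def)
  next
    case False
    then have "fst x i = 0" using gx unfolding good_def by simp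
    then show ?thesis using False by (simp add: FF_def)
  qed
  have sn: "snd (FF x) = snd x" by (simp add: FF_def)
  have z: "(fst (FF x) = (\<lambda>_. 0)) = (fst x = (\<lambda>_. 0))"
  proof
    assume h: "fst (FF x) = (\<lambda>_. 0)"
    show "fst x = (\<lambda>_. 0)"
    proof
      fix i have "fst (FF x) i = 0" using h by simp
      then show "fst x i = 0" using nz by simp
    qed
  next
    assume h: "fst x = (\<lambda>_. 0)"
    show "fst (FF x) = (\<lambda>_. 0)"
    proof
      fix i have "fst x i = 0" using h by simp
      then show "fst (FF x) i = 0" using nz by simp
    qed
  qed
  show ?thesis
  proof (cases s)
    case EmptySp then show ?thesis using z sn by simp
  next
    case FullSp then show ?thesis by simp
  next
    case (Sp a' l')
    then show ?thesis by (simp only: cyc_has_span.simps nz sn)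
  qed
qed

lemma FF0: "FF ((\<lambda>_. 0), (\<lambda>_. 0)) = ((\<lambda>_. 0), (\<lambda>_. 0))"
  unfolding FF_def by (simp add: f0 fun_eq_iff)

lemma dir1: "product_basis scale n E r bT \<and> (\<forall>j<r. is_min_span n (bT j) (mkspan n (a j) (l j)))"
proof -
  have c1: "\<forall>j<r. bT j \<in> cycles n E" using bT_cyc by blast
  have c2: "\<forall>c. lincomb scale {..<r} c bT = ((\<lambda>_. 0), (\<lambda>_. 0)) \<longrightarrow> (\<forall>j<r. c j = 0)"
  proof (intro allI impI)
    fix c j assume z: "lincomb scale {..<r} c bT = ((\<lambda>_. 0), (\<lambda>_. 0))" and j: "j < r"
    have "FF (lincomb scale {..<r} c bT) = lincomb ps {..<r} c Ec" using FF_lc[of "{..<r}" c] by simp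
    then have "lincomb ps {..<r} c Ec = FF ((\<lambda>_. 0), (\<lambda>_. 0))" using z by simp
    then have "lincomb ps {..<r} c Ec = ((\<lambda>_. 0), (\<lambda>_. 0))" using FF0 by simp
    then show "c j = 0" using P_indep j by blast
  qed
  have c3: "\<forall>x\<in>cycles n E. \<exists>c. x = lincomb scale {..<r} c bT"
  proof
    fix x assume x: "x \<in> cycles n E"
    obtain c where c: "FF x = lincomb ps {..<r} c Ec" using P_decomp FF_cyc[OF x] by blast
    have e: "FF (lincomb scale {..<r} c bT) = lincomb ps {..<r} c Ec" "good (lincomb scale {..<r} c bT)"
      using FF_lc[of "{..<r}" c] by auto
    have "x = lincomb scale {..<r} c bT"
      using FF_inj[OF cyc_good[OF x] e(2)] e(1) c by simp
    then show "\<exists>c. x = lincomb scale {..<r} c bT" by blast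
  qed
  have c4: "\<forall>s. \<forall>x\<in>cycles n E. cyc_has_span n s x \<longrightarrow>
        (\<exists>c. x = lincomb scale {j. j < r \<and> cyc_has_span n s (bT j)} c bT)"
  proof (intro allI ballI impI)
    fix s x assume x: "x \<in> cycles n E" and sx: "cyc_has_span n s x"
    define J where "J = {j. j < r \<and> cyc_has_span n s (bT j)}"
    have J: "finite J" "J \<subseteq> {..<r}" unfolding J_def by auto
    obtain c where c: "FF x = lincomb ps {..<r} c Ec" using P_decomp FF_cyc[OF x] by blast
    have sF: "cyc_has_span n s (FF x)" using FF_span cyc_good[OF x] sx by simp
    have cz: "\<forall>j\<in>{..<r} - J. c j = 0"
    proof (intro ballI, rule ccontr)
      fix j assume j: "j \<in> {..<r} - J" and cj: "c j \<noteq> 0"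
      have "cyc_has_span n s (Ec j)" using P_span[OF c sF _ cj] j by simp
      then have "cyc_has_span n s (bT j)" using FF_span[OF good_bT] FF_bT j by simp
      then show False using j unfolding J_def by simp
    qed
    have "lincomb ps {..<r} c Ec = lincomb ps J c Ec" by (rule lc_restrict) (use J cz in auto)
    then have ex: "FF x = lincomb ps J c Ec" using c by simp
    have e: "FF (lincomb scale J c bT) = lincomb ps J c Ec" "good (lincomb scale J c bT)"
      using FF_lc[OF J, of c] by auto
    have "x = lincomb scale J c bT"
      using FF_inj[OF cyc_good[OF x] e(2)] e(1) ex by simp
    then show "\<exists>c. x = lincomb scale {j. j < r \<and> cyc_has_span n s (bT j)} c bT"
      unfolding J_def by blast
  qed
  have c5: "\<forall>j<r. is_min_span n (bT j) (mkspan n (a j) (l j))"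
  proof (intro allI impI)
    fix j assume j: "j < r"
    have "\<forall>s. cyc_has_span n s (bT j) = cyc_has_span n s (Ec j)"
      using FF_span[OF good_bT[OF j]] FF_bT[OF j] by simp
    then show "is_min_span n (bT j) (mkspan n (a j) (l j))"
      using P_min[OF j] unfolding is_min_span_def by simp
  qed
  show ?thesis using c1 c2 c3 c4 c5 unfolding product_basis_def by blast
qed

end
end



lemma lincomb_cong: "\<forall>j\<in>J. c j = c' j \<Longrightarrow> lincomb sc J c b = lincomb sc J c' b"
  unfolding lincomb_def by (simp cong: sum.cong)

context S begin

lemma E0: "i < n \<Longrightarrow> (0, 0, 0) \<in> E i" using linE by blast
lemma Eadd: assumes "i < n" "(v, \<beta>, w) \<in> E i" "(v', \<beta>', w') \<in> E i"
  shows "(v + v', \<beta> + \<beta>', w + w') \<in> E i"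
proof -
  note h = linE[OF assms(1), THEN conjunct2, THEN conjunct2, THEN conjunct2, THEN conjunct2, THEN conjunct1]
  show ?thesis using h assms(2,3) by blast
qed
lemma Escale: assumes "i < n" "(v, \<beta>, w) \<in> E i"
  shows "(scale c v, c * \<beta>, scale c w) \<in> E i"
proof -
  note h = linE[OF assms(1), THEN conjunct2, THEN conjunct2, THEN conjunct2, THEN conjunct2, THEN conjunct2]
  show ?thesis using h assms(2) by blast
qed

lemma Esum: assumes i: "i < n"
  shows "finite J \<Longrightarrow> (\<forall>j\<in>J. (p j, q j, s j) \<in> E i) \<Longrightarrow> (sum p J, sum q J, sum s J) \<in> E i"
proof (induct J rule: finite_induct)
  case empty then show ?case using E0[OF i] by simp
next
  case (insert x F)
  then have h: "(p x, q x, s x) \<in> E i" "(sum p F, sum q F, sum s F) \<in> E i" by auto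
  show ?case using Eadd[OF i h] insert(1,2) by simp
qed

lemma lc_diff_fst: "fst (lincomb scale J (\<lambda>j. c j - c' j) b) i = fst (lincomb scale J c b) i - fst (lincomb scale J c' b) i"
  unfolding lincomb_def by (simp add: VS.scale_left_diff_distrib sum_subtractf)
lemma lc_diff_snd: "snd (lincomb scale J (\<lambda>j. c j - c' j) b) i = snd (lincomb scale J c b) i - snd (lincomb scale J c' b) i"
  unfolding lincomb_def by (simp add: left_diff_distrib sum_subtractf)
lemma lc_add_fst: "fst (lincomb scale J (\<lambda>j. c j + c' j) b) i = fst (lincomb scale J c b) i + fst (lincomb scale J c' b) i"
  unfolding lincomb_def by (simp add: VS.scale_left_distrib sum.distrib)
lemma lc_mult_fst: "fst (lincomb scale J (\<lambda>j. d * c j) b) i = scale d (fst (lincomb scale J c b) i)"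
  unfolding lincomb_def by (simp add: VS.scale_sum_right)

context
  fixes vs :: "nat \<Rightarrow> nat \<Rightarrow> 'v"
  assumes pb: "product_basis scale n E r (\<lambda>j. (vs j, \<alpha> j))"
    and ms: "\<forall>j<r. is_min_span n (vs j, \<alpha> j) (mkspan n (a j) (l j))"
begin

abbreviation "bb \<equiv> (\<lambda>j. (vs j, \<alpha> j))"
abbreviation "lc c \<equiv> lincomb scale {..<r} c bb"

lemma bb_cyc: "j < r \<Longrightarrow> bb j \<in> cycles n E"
  using pb unfolding product_basis_def by blast

lemma pb_indep: "lc c = ((\<lambda>_. 0), (\<lambda>_. 0)) \<Longrightarrow> j < r \<Longrightarrow> c j = 0"
  using pb unfolding product_basis_def by blast

lemma pb_span: "x \<in> cycles n E \<Longrightarrow> \<exists>c. x = lc c"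
  using pb unfolding product_basis_def by blast

lemma pb_sp: "x \<in> cycles n E \<Longrightarrow> cyc_has_span n s x \<Longrightarrow>
    \<exists>c. x = lincomb scale {j. j < r \<and> cyc_has_span n s (bb j)} c bb"
  using pb unfolding product_basis_def by blast

lemma lc_cyc: "finite J \<Longrightarrow> J \<subseteq> {..<r} \<Longrightarrow> lincomb scale J c bb \<in> cycles n E"
proof -
  assume J: "finite J" "J \<subseteq> {..<r}"
  have e: "(\<Sum>j\<in>J. scale (c j) (vs j i), \<Sum>j\<in>J. c j * \<alpha> j i, \<Sum>j\<in>J. scale (c j) (vs j (Suc i mod n))) \<in> E i"
    if i: "i < n" for i
  proof (rule Esum[OF i J(1)], intro ballI)
    fix j assume "j \<in> J"
    then have "j < r" using J by auto
    then have "(vs j i, \<alpha> j i, vs j (Suc i mod n)) \<in> E i" using bb_cyc i unfolding cycles_def by auto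
    then show "(scale (c j) (vs j i), c j * \<alpha> j i, scale (c j) (vs j (Suc i mod n))) \<in> E i"
      by (rule Escale[OF i])
  qed
  have z: "vs j i = 0 \<and> \<alpha> j i = 0" if "j \<in> J" "n \<le> i" for j i
    using bb_cyc that J unfolding cycles_def by auto
  show ?thesis unfolding cycles_def lincomb_def using e z by simp
qed

lemma lc_uniq: "lc c = lc c' \<Longrightarrow> j < r \<Longrightarrow> c j = c' j"
proof -
  assume e: "lc c = lc c'" and j: "j < r"
  have "lc (\<lambda>j. c j - c' j) = ((\<lambda>_. 0), (\<lambda>_. 0))"
    using e by (simp add: prod_eq_iff fun_eq_iff lc_diff_fst lc_diff_snd)
  then show ?thesis using pb_indep j by fastforce
qed

lemma vs_ho: "j < r \<Longrightarrow> i < n \<Longrightarrow> i \<notin> halfopen n (a j) (l j) \<Longrightarrow> vs j i = 0"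
proof -
  assume j: "j < r" and i: "i < n" and nh: "i \<notin> halfopen n (a j) (l j)"
  have h: "cyc_has_span n (mkspan n (a j) (l j)) (bb j)" using ms j unfolding is_min_span_def by blast
  show ?thesis
  proof (cases "l j = n")
    case True then show ?thesis using ho_full al j i nh by auto
  next
    case False then show ?thesis using h i nh by (auto simp: mkspan_def)
  qed
qed

lemma key:
  assumes x: "x \<in> cycles n E" "x = lc c" and x': "x' \<in> cycles n E" "x' = lc c'"
    and e: "fst x i = fst x' i" and i: "i < n" and k: "k < r" and hk: "i \<in> halfopen n (a k) (l k)"
  shows "c k = c' k"
proof -
  define y where "y = lc (\<lambda>j. c j - c' j)"
  have yc: "y \<in> cycles n E" unfolding y_def by (rule lc_cyc) auto
  have fy: "fst y i' = fst x i' - fst x' i'" for i' unfolding y_def using x x' by (simp add: lc_diff_fst)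
  have sp: "cyc_has_span n (Sp i (n-1)) y"
  proof -
    have "\<forall>i'<n. fst y i' \<noteq> 0 \<longrightarrow> i' \<in> halfopen n i (n-1)"
    proof (intro allI impI)
      fix i' assume "i' < n" "fst y i' \<noteq> 0"
      then have "i' \<noteq> i" using fy e by auto
      then show "i' \<in> halfopen n i (n-1)" using ho_all i \<open>i' < n\<close> by blast
    qed
    moreover have "\<forall>i'<n. snd y i' \<noteq> 0 \<longrightarrow> i' \<in> closedint n i (n-1)" using ci_all i by blast
    ultimately show ?thesis using i npos by simp
  qed
  define J where "J = {j. j < r \<and> cyc_has_span n (Sp i (n-1)) (bb j)}"
  obtain e where ey: "y = lincomb scale J e bb" using pb_sp[OF yc sp] unfolding J_def by blast
  define e' where "e' j = (if j \<in> J then e j else 0)" for j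
  have "lc e' = lincomb scale J e' bb"
    by (rule lc_restrict) (auto simp: J_def e'_def)
  also have "\<dots> = lincomb scale J e bb" by (rule lincomb_cong) (simp add: e'_def)
  finally have "lc (\<lambda>j. c j - c' j) = lc e'" using ey y_def by simp
  then have d: "c k - c' k = e' k" using lc_uniq k by blast
  have "k \<notin> J"
  proof
    assume "k \<in> J"
    then have hs: "cyc_has_span n (Sp i (n-1)) (bb k)" unfolding J_def by simp
    have "span_le n (mkspan n (a k) (l k)) (Sp i (n-1))"
      using ms k hs unfolding is_min_span_def by blast
    moreover have "\<not> span_le n (mkspan n (a k) (l k)) (Sp i (n-1))"
    proof (cases "l k = n")
      case True then show ?thesis by (simp add: mkspan_def)
    next
      case False
      have "i \<notin> halfopen n i (n-1)" using not_ho_self i npos by simp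
      then show ?thesis using False hk by (auto simp: mkspan_def)
    qed
    ultimately show False by blast
  qed
  then show ?thesis using d by (simp add: e'_def)
qed

lemma through: "i < n \<Longrightarrow> v \<in> V i \<Longrightarrow> \<exists>c. \<exists>x\<in>cycles n E. fst x i = v \<and> x = lc c"
proof -
  assume i: "i < n" and v: "v \<in> V i"
  obtain \<beta> w where "(v, \<beta>, w) \<in> E i" using trE[OF i] v by blast
  then obtain y \<gamma> where "(y, \<gamma>) \<in> cycles n E" "(y i, \<gamma> i, y (Suc i mod n)) = (v, \<beta>, w)"
    using red i unfolding is_reduced_def by blast
  then have yc: "(y, \<gamma>) \<in> cycles n E" and yv: "y i = v" by auto
  obtain c where "(y, \<gamma>) = lc c" using pb_span[OF yc] by blast
  then have e: "lc c = (y, \<gamma>)" by simp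
  show ?thesis using yc yv e by (intro exI[of _ c] bexI[of _ "(y, \<gamma>)"]) simp_all
qed

definition "coef i v = (SOME c. \<exists>x\<in>cycles n E. fst x i = v \<and> x = lc c)"
definition "ff i v = (\<lambda>k. if k < r then coef i v k * uu k i else 0)"

lemma ff_cyc: assumes x: "x \<in> cycles n E" "x = lc c" and i: "i < n"
  shows "ff i (fst x i) = (\<lambda>k. if k < r then c k * uu k i else 0)"
proof -
  have ex: "\<exists>c. \<exists>x'\<in>cycles n E. fst x' i = fst x i \<and> x' = lc c"
    by (rule exI[of _ c], rule bexI[of _ x]) (use x in auto)
  have "\<exists>x'\<in>cycles n E. fst x' i = fst x i \<and> x' = lc (coef i (fst x i))"
    unfolding coef_def by (rule someI_ex[OF ex])
  then obtain x' where x': "x' \<in> cycles n E" "fst x' i = fst x i" "x' = lc (coef i (fst x i))"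
    by blast
  have "coef i (fst x i) k * uu k i = c k * uu k i" if "k < r" for k
  proof (cases "i \<in> halfopen n (a k) (l k)")
    case True
    then show ?thesis using key[OF x'(1,3) x x'(2) i that True] by simp
  next
    case False then show ?thesis by (simp add: uu_ho)
  qed
  then show ?thesis unfolding ff_def by auto
qed


lemma thr2: "i < n \<Longrightarrow> v \<in> V i \<Longrightarrow> \<exists>c. v = fst (lc c) i"
  using through by blast

lemma lcc: "lc c \<in> cycles n E" by (rule lc_cyc) auto

lemma ff_lc: "i < n \<Longrightarrow> ff i (fst (lc c) i) = (\<lambda>k. if k < r then c k * uu k i else 0)"
  using ff_cyc[OF lcc refl] by simp

lemma ff_PV: assumes i: "i < n" and v: "v \<in> V i" shows "ff i v \<in> PV i"
proof -
  obtain c where c: "v = fst (lc c) i" using thr2[OF i v] by blast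
  show ?thesis unfolding c ff_lc[OF i] prodV_def elemV_def uu_ho by auto
qed

lemma ff_inj: assumes i: "i < n" shows "inj_on (ff i) (V i)"
proof (rule inj_onI)
  fix v v' assume v: "v \<in> V i" and v': "v' \<in> V i" and e: "ff i v = ff i v'"
  obtain c where c: "v = fst (lc c) i" using thr2[OF i v] by blast
  obtain c' where c': "v' = fst (lc c') i" using thr2[OF i v'] by blast
  have ce: "c k * uu k i = c' k * uu k i" if "k < r" for k
  proof -
    have "ff i v k = ff i v' k" using e by simp
    then show ?thesis using that unfolding c c' ff_lc[OF i] by simp
  qed
  have "(\<Sum>j<r. scale (c j) (vs j i)) = (\<Sum>j<r. scale (c' j) (vs j i))"
  proof (rule sum.cong)
    fix j assume "j \<in> {..<r}"
    then have j: "j < r" by simp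
    show "scale (c j) (vs j i) = scale (c' j) (vs j i)"
    proof (cases "i \<in> halfopen n (a j) (l j)")
      case True then show ?thesis using ce[OF j] by (simp add: uu_ho)
    next
      case False then show ?thesis using vs_ho[OF j i False] by simp
    qed
  qed simp
  then show "v = v'" unfolding c c' lincomb_def by simp
qed

lemma ff_surj: assumes i: "i < n" and t: "t \<in> PV i" shows "t \<in> ff i ` V i"
proof -
  have v: "fst (lc t) i \<in> V i" using cyc_V[OF lcc i] .
  have "ff i (fst (lc t) i) = t"
  proof
    fix k
    show "ff i (fst (lc t) i) k = t k"
    proof (cases "k < r")
      case True
      then have "t k \<in> elemV n (a k) (l k) i" using t unfolding prodV_def by blast
      then show ?thesis using True unfolding ff_lc[OF i] elemV_def uu_ho by (auto split: if_splits)
    next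
      case False
      then show ?thesis using t unfolding ff_lc[OF i] prodV_def by auto
    qed
  qed
  then show ?thesis using v by force
qed

lemma ff_add: assumes i: "i < n" and v: "v \<in> V i" and v': "v' \<in> V i"
  shows "ff i (v + v') = ff i v + ff i v'"
proof -
  obtain c where c: "v = fst (lc c) i" using thr2[OF i v] by blast
  obtain c' where c': "v' = fst (lc c') i" using thr2[OF i v'] by blast
  have "v + v' = fst (lc (\<lambda>j. c j + c' j)) i" unfolding c c' by (simp add: lc_add_fst)
  then show ?thesis unfolding c c' using ff_lc[OF i] by (simp add: fun_eq_iff distrib_right)
qed

lemma ff_scale: assumes i: "i < n" and v: "v \<in> V i"
  shows "ff i (scale d v) = ps d (ff i v)"
proof -
  obtain c where c: "v = fst (lc c) i" using thr2[OF i v] by blast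
  have "scale d v = fst (lc (\<lambda>j. d * c j)) i" unfolding c by (simp add: lc_mult_fst)
  then show ?thesis unfolding c using ff_lc[OF i] by (simp add: fun_eq_iff)
qed

lemma ff_edge1: assumes i: "i < n" and e: "(v, \<beta>, w) \<in> E i"
  shows "(ff i v, \<beta>, ff (Suc i mod n) w) \<in> PE i"
proof -
  obtain y \<gamma> where yc: "(y, \<gamma>) \<in> cycles n E" and ye: "(y i, \<gamma> i, y (Suc i mod n)) = (v, \<beta>, w)"
    using red i e unfolding is_reduced_def by blast
  obtain c where "(y, \<gamma>) = lc c" using pb_span[OF yc] by blast
  then have yl: "lc c = (y, \<gamma>)" by simp
  have si: "Suc i mod n < n" using npos by simp
  have fv: "ff i v = (\<lambda>k. if k < r then c k * uu k i else 0)"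
    using ff_lc[OF i, of c] yl ye by simp
  have fw: "ff (Suc i mod n) w = (\<lambda>k. if k < r then c k * uu k (Suc i mod n) else 0)"
    using ff_lc[OF si, of c] yl ye by simp
  have "snd (lc c) i = \<gamma> i" using yl by simp
  then have b: "\<beta> = (\<Sum>k<r. c k * \<alpha> k i)"
    using ye unfolding lincomb_def by simp
  define g where "g k = c k * \<alpha> k i" for k
  have m: "\<forall>k<r. (ff i v k, g k, ff (Suc i mod n) w k) \<in> elemE n (\<alpha> k) (a k) (l k) i"
    unfolding fv fw g_def elemE_def by auto
  have z: "\<forall>k. r \<le> k \<longrightarrow> ff i v k = 0 \<and> ff (Suc i mod n) w k = 0" unfolding fv fw by auto
  show ?thesis unfolding prodE_def mem_Collect_eq
    by (rule exI[of _ "ff i v"], rule exI[of _ g], rule exI[of _ "ff (Suc i mod n) w"])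
       (use m z b g_def in auto)
qed

lemma ff_edge2: assumes i: "i < n" and v: "v \<in> V i" and w: "w \<in> V (Suc i mod n)"
    and e: "(ff i v, \<beta>, ff (Suc i mod n) w) \<in> PE i"
  shows "(v, \<beta>, w) \<in> E i"
proof -
  have si: "Suc i mod n < n" using npos by simp
  obtain \<gamma> where G: "\<forall>k<r. \<exists>d. ff i v k = d * uu k i \<and> \<gamma> k = d * \<alpha> k i
     \<and> ff (Suc i mod n) w k = d * uu k (Suc i mod n)" and b: "\<beta> = (\<Sum>k<r. \<gamma> k)"
    using PE_edge[OF e] by blast
  have "\<forall>k. \<exists>d. k < r \<longrightarrow> ff i v k = d * uu k i \<and> \<gamma> k = d * \<alpha> k i
     \<and> ff (Suc i mod n) w k = d * uu k (Suc i mod n)" using G by blast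
  then obtain D where D: "\<forall>k. k < r \<longrightarrow> ff i v k = D k * uu k i \<and> \<gamma> k = D k * \<alpha> k i
     \<and> ff (Suc i mod n) w k = D k * uu k (Suc i mod n)" by (metis choice)
  have f1: "ff i (fst (lc D) i) = ff i v"
    unfolding ff_lc[OF i] using D by (auto simp: fun_eq_iff ff_def)
  have vv: "fst (lc D) i = v" by (rule inj_onD[OF ff_inj[OF i] f1 cyc_V[OF lcc i] v])
  have f2: "ff (Suc i mod n) (fst (lc D) (Suc i mod n)) = ff (Suc i mod n) w"
      unfolding ff_lc[OF si] using D by (auto simp: fun_eq_iff ff_def)
  have ww: "fst (lc D) (Suc i mod n) = w" by (rule inj_onD[OF ff_inj[OF si] f2 cyc_V[OF lcc si] w])
  have bb: "snd (lc D) i = \<beta>" unfolding b lincomb_def using D by simp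
  have "(fst (lc D) i, snd (lc D) i, fst (lc D) (Suc i mod n)) \<in> E i"
    using lcc[of D] i unfolding cycles_def by (auto simp: case_prod_beta)
  then show ?thesis using vv ww bb by simp
qed

lemma dir2: "lin_iso scale n V E ps PV PE"
  unfolding lin_iso_def
proof (rule exI[of _ ff], intro allI impI)
  fix i assume i: "i < n"
  have A: "bij_betw (ff i) (V i) (PV i)"
    unfolding bij_betw_def using ff_inj[OF i] ff_PV[OF i] ff_surj[OF i] by blast
  have B: "\<forall>x\<in>V i. \<forall>y\<in>V i. ff i (x + y) = ff i x + ff i y" using ff_add[OF i] by blast
  have C: "\<forall>c. \<forall>x\<in>V i. ff i (scale c x) = ps c (ff i x)" using ff_scale[OF i] by blast
  have D: "\<forall>v\<in>V i. \<forall>\<beta>. \<forall>w\<in>V (Suc i mod n). (v, \<beta>, w) \<in> E i \<longleftrightarrow> (ff i v, \<beta>, ff (Suc i mod n) w) \<in> PE i"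
    using ff_edge1[OF i] ff_edge2[OF i] by blast
  show "bij_betw (ff i) (V i) (PV i) \<and> (\<forall>x\<in>V i. \<forall>y\<in>V i. ff i (x + y) = ff i x + ff i y)
      \<and> (\<forall>c. \<forall>x\<in>V i. ff i (scale c x) = ps c (ff i x))
      \<and> (\<forall>v\<in>V i. \<forall>\<beta>. \<forall>w\<in>V (Suc i mod n). (v, \<beta>, w) \<in> E i \<longleftrightarrow> (ff i v, \<beta>, ff (Suc i mod n) w) \<in> PE i)"
    using A B C D by blast
qed

end
end

theorem mainTheorem3:
  fixes scale :: "'f::{field,finite} \<Rightarrow> 'v::ab_group_add \<Rightarrow> 'v"
    and n r :: nat
    and V :: "nat \<Rightarrow> 'v set" and E :: "nat \<Rightarrow> ('v \<times> 'f \<times> 'v) set"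
    and \<alpha> :: "nat \<Rightarrow> nat \<Rightarrow> 'f" and a l :: "nat \<Rightarrow> nat"
  assumes "vector_space scale"
    and "1 \<le> n"
    and "is_linear_trellis scale n V E"
    and "is_reduced n V E"
    and "\<forall>j<r. a j < n \<and> l j \<le> n"
    and "\<forall>j<r. \<forall>i. n \<le> i \<longrightarrow> \<alpha> j i = 0"
    and "\<forall>j<r. \<forall>i<n. \<alpha> j i \<noteq> 0 \<longrightarrow> i \<in> closedint n (a j) (l j)"
    and "\<forall>j<r. \<forall>k<r. j \<noteq> k \<longrightarrow> \<not> (l j = 0 \<and> l k = 0 \<and> a j = a k)"
    and "\<forall>j<r. l j = 0 \<longrightarrow> \<alpha> j \<noteq> (\<lambda>_. 0)"
  shows "lin_iso scale n V E (\<lambda>c v j. c * v j)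
            (prodV r (\<lambda>j. elemV n (a j) (l j))) (prodE r (\<lambda>j. elemE n (\<alpha> j) (a j) (l j)))
         \<longleftrightarrow> (\<exists>vs :: nat \<Rightarrow> nat \<Rightarrow> 'v.
               product_basis scale n E r (\<lambda>j. (vs j, \<alpha> j))
             \<and> (\<forall>j<r. is_min_span n (vs j, \<alpha> j) (mkspan n (a j) (l j))))"
  proof -
  interpret S scale n r V E \<alpha> a l
    by (rule S.intro) (use assms in auto)
  show ?thesis
  proof
    assume "lin_iso scale n V E (\<lambda>c v j. c * v j)
            (prodV r (\<lambda>j. elemV n (a j) (l j))) (prodE r (\<lambda>j. elemE n (\<alpha> j) (a j) (l j)))"
    then obtain f where iso: "\<forall>i<n. bij_betw (f i) (V i) (PV i)
      \<and> (\<forall>x\<in>V i. \<forall>y\<in>V i. f i (x + y) = f i x + f i y)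
      \<and> (\<forall>c. \<forall>x\<in>V i. f i (scale c x) = ps c (f i x))
      \<and> (\<forall>v\<in>V i. \<forall>\<alpha>. \<forall>w\<in>V (Suc i mod n).
            (v, \<alpha>, w) \<in> E i \<longleftrightarrow> (f i v, \<alpha>, f (Suc i mod n) w) \<in> PE i)"
      unfolding lin_iso_def by blast
    have bt: "bT f = (\<lambda>j. (vsT f j, \<alpha> j))" by (rule bT_eq[OF iso])
    show "\<exists>vs :: nat \<Rightarrow> nat \<Rightarrow> 'v.
               product_basis scale n E r (\<lambda>j. (vs j, \<alpha> j))
             \<and> (\<forall>j<r. is_min_span n (vs j, \<alpha> j) (mkspan n (a j) (l j)))"
      using dir1[OF iso] unfolding bt by blast
  next
    assume "\<exists>vs :: nat \<Rightarrow> nat \<Rightarrow> 'v.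
               product_basis scale n E r (\<lambda>j. (vs j, \<alpha> j))
             \<and> (\<forall>j<r. is_min_span n (vs j, \<alpha> j) (mkspan n (a j) (l j)))"
    then obtain vs :: "nat \<Rightarrow> nat \<Rightarrow> 'v" where pb: "product_basis scale n E r (\<lambda>j. (vs j, \<alpha> j))"
      and ms: "\<forall>j<r. is_min_span n (vs j, \<alpha> j) (mkspan n (a j) (l j))" by blast
    show "lin_iso scale n V E (\<lambda>c v j. c * v j)
            (prodV r (\<lambda>j. elemV n (a j) (l j))) (prodE r (\<lambda>j. elemE n (\<alpha> j) (a j) (l j)))"
      using dir2[OF pb ms] .
  qed
qed

end
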